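(* Let $d$ be a premetric with open balls on a topological space $X$. (1) If $\overline d=\overline d^\circ$, then the premetric $\overline d=\overline d^\circ$ is right-continuous. (2) If $d$ is $\overline{\mathsf{dist}}$-continuous, then $\overline d=\overline d^\circ$ and this premetric is right-continuous and $\overline{\mathsf{dist}}$-continuous.
   Context: A premetric on $X$ is $d:X\times X\to[0,\infty)$ with $d(x,x)=0$. $B_d(x,\varepsilon)=\{y:d(x,y)<\varepsilon\}$, $B_d(A,\varepsilon)=\bigcup_{a\in A}B_d(a,\varepsilon)$; $d$ has open balls if every $B_d(x,\varepsilon)$ is open; right-continuous if $y\mapsto d(x,y)$ is continuous for each $x$. For non-empty $A$: $\overline d_A(x)=\inf\{\varepsilon>0:x\in\overline{B_d(A,\varepsilon)}\}$, $\overline d^\circ_A(x)=\inf\{\varepsilon>0:x\in B_d(A,\varepsilon)\cup\mathrm{int}\,\overline{B_d(A,\varepsilon)}\}$; a premetric is $\overline{\mathsf{dist}}$-continuous if $\overline d_A$ is continuous for every non-empty $A$. $\overline d(x,y)=\overline d_{\{x\}}(y)$, $\overline d^\circ(x,y)=\overline d^\circ_{\{x\}}(y)$. *)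

theory Defs
  imports "HOL-Analysis.Analysis"
begin

definition premetric :: "('a \<Rightarrow> 'a \<Rightarrow> real) \<Rightarrow> bool" where
  "premetric d \<longleftrightarrow> (\<forall>x y. 0 \<le> d x y) \<and> (\<forall>x. d x x = 0)"

definition pball :: "('a \<Rightarrow> 'a \<Rightarrow> real) \<Rightarrow> 'a \<Rightarrow> real \<Rightarrow> 'a set" where
  "pball d x e = {y. d x y < e}"

definition pball_set :: "('a \<Rightarrow> 'a \<Rightarrow> real) \<Rightarrow> 'a set \<Rightarrow> real \<Rightarrow> 'a set" where
  "pball_set d A e = (\<Union>a\<in>A. pball d a e)"

definition has_open_balls :: "('a::topological_space \<Rightarrow> 'a \<Rightarrow> real) \<Rightarrow> bool" where
  "has_open_balls d \<longleftrightarrow> (\<forall>x e. open (pball d x e))"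

definition right_continuous :: "('a::topological_space \<Rightarrow> 'a \<Rightarrow> real) \<Rightarrow> bool" where
  "right_continuous d \<longleftrightarrow> (\<forall>x. continuous_on UNIV (d x))"

definition dbar_set :: "('a::topological_space \<Rightarrow> 'a \<Rightarrow> real) \<Rightarrow> 'a set \<Rightarrow> 'a \<Rightarrow> real" where
  "dbar_set d A x = Inf {e. e > 0 \<and> x \<in> closure (pball_set d A e)}"

definition dbar_circ_set :: "('a::topological_space \<Rightarrow> 'a \<Rightarrow> real) \<Rightarrow> 'a set \<Rightarrow> 'a \<Rightarrow> real" where
  "dbar_circ_set d A x =
     Inf {e. e > 0 \<and> x \<in> pball_set d A e \<union> interior (closure (pball_set d A e))}"

definition dist_bar_continuous :: "('a::topological_space \<Rightarrow> 'a \<Rightarrow> real) \<Rightarrow> bool" where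
  "dist_bar_continuous d \<longleftrightarrow> (\<forall>A. A \<noteq> {} \<longrightarrow> continuous_on UNIV (dbar_set d A))"

definition dbar :: "('a::topological_space \<Rightarrow> 'a \<Rightarrow> real) \<Rightarrow> 'a \<Rightarrow> 'a \<Rightarrow> real" where
  "dbar d x y = dbar_set d {x} y"

definition dbar_circ :: "('a::topological_space \<Rightarrow> 'a \<Rightarrow> real) \<Rightarrow> 'a \<Rightarrow> 'a \<Rightarrow> real" where
  "dbar_circ d x y = dbar_circ_set d {x} y"

end

theory Submission
  imports Defs
begin

lemma pball_set_mono: "e \<le> e' \<Longrightarrow> pball_set d A e \<subseteq> pball_set d A e'"
  unfolding pball_set_def pball_def by auto

lemma S_ne: assumes "A \<noteq> {}"
  shows "{e. e > 0 \<and> x \<in> closure (pball_set d A e)} \<noteq> {}"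
proof -
  obtain a where a: "a \<in> A" using assms by auto
  have "x \<in> pball_set d A (\<bar>d a x\<bar> + 1)" using a unfolding pball_set_def pball_def by (auto intro!: bexI[of _ a])
  hence "x \<in> closure (pball_set d A (\<bar>d a x\<bar> + 1))" using closure_subset by blast
  thus ?thesis by (intro notI) (smt (verit) mem_Collect_eq empty_iff)
qed

lemma C_ne: assumes "A \<noteq> {}"
  shows "{e. e > 0 \<and> x \<in> pball_set d A e \<union> interior (closure (pball_set d A e))} \<noteq> {}"
proof -
  obtain a where a: "a \<in> A" using assms by auto
  have "x \<in> pball_set d A (\<bar>d a x\<bar> + 1)" using a unfolding pball_set_def pball_def by (auto intro!: bexI[of _ a])
  thus ?thesis by (intro notI) (smt (verit) mem_Collect_eq empty_iff UnI1)
qed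

lemma S_bdd: "bdd_below {e::real. e > 0 \<and> P e}"
  by (rule bdd_belowI[of _ 0]) auto

lemma dbar_set_nonneg: "A \<noteq> {} \<Longrightarrow> 0 \<le> dbar_set d A x"
  unfolding dbar_set_def by (rule cInf_greatest[OF S_ne]) auto

lemma dbar_set_less_iff: assumes "A \<noteq> {}"
  shows "dbar_set d A x < u \<longleftrightarrow> (\<exists>e. e > 0 \<and> e < u \<and> x \<in> closure (pball_set d A e))"
  unfolding dbar_set_def using cInf_less_iff[OF S_ne[OF assms] S_bdd] by auto

lemma dbar_set_le: "e > 0 \<Longrightarrow> x \<in> closure (pball_set d A e) \<Longrightarrow> dbar_set d A x \<le> e"
  unfolding dbar_set_def by (rule cInf_lower) (auto intro: S_bdd)

lemma dbar_set_lsc: assumes "A \<noteq> {}" "l < dbar_set d A x"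
  shows "\<exists>U. open U \<and> x \<in> U \<and> (\<forall>y\<in>U. l < dbar_set d A y)"
proof -
  obtain s where s: "l < s" "s < dbar_set d A x" using assms(2) dense by blast
  show ?thesis
  proof (cases "s > 0")
    case False
    thus ?thesis using s dbar_set_nonneg[OF assms(1), of d] by (intro exI[of _ UNIV]) (smt (verit) UNIV_I open_UNIV)
  next
    case True
    have nx: "x \<notin> closure (pball_set d A s)"
      using dbar_set_le[OF True, of x d A] s by auto
    define U where "U = - closure (pball_set d A s)"
    have "\<forall>y\<in>U. l < dbar_set d A y"
    proof
      fix y assume y: "y \<in> U"
      have "s \<le> dbar_set d A y"
        unfolding dbar_set_def
      proof (rule cInf_greatest[OF S_ne[OF assms(1)]])
        fix e assume "e \<in> {e. e > 0 \<and> y \<in> closure (pball_set d A e)}"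
        hence e: "e > 0" "y \<in> closure (pball_set d A e)" by auto
        show "s \<le> e"
        proof (rule ccontr)
          assume "\<not> s \<le> e"
          hence "closure (pball_set d A e) \<subseteq> closure (pball_set d A s)"
            by (intro closure_mono pball_set_mono) auto
          thus False using e y U_def by auto
        qed
      qed
      thus "l < dbar_set d A y" using s by auto
    qed
    thus ?thesis using nx U_def by (intro exI[of _ U]) auto
  qed
qed

lemma open_pball_set: "has_open_balls d \<Longrightarrow> open (pball_set d A e)"
  unfolding has_open_balls_def pball_set_def by auto

lemma dbar_set_usc: assumes "A \<noteq> {}" "has_open_balls d" "dbar_circ_set d A x = dbar_set d A x"
  "dbar_set d A x < u"
  shows "\<exists>U. open U \<and> x \<in> U \<and> (\<forall>y\<in>U. dbar_set d A y < u)"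
proof -
  have "dbar_circ_set d A x < u" using assms by simp
  then obtain e where e: "e > 0" "e < u"
    "x \<in> pball_set d A e \<union> interior (closure (pball_set d A e))"
    unfolding dbar_circ_set_def using cInf_less_iff[OF C_ne[OF assms(1)] S_bdd] by auto
  define U where "U = pball_set d A e \<union> interior (closure (pball_set d A e))"
  have "open U" unfolding U_def using open_pball_set[OF assms(2)] by auto
  moreover have "\<forall>y\<in>U. dbar_set d A y < u"
  proof
    fix y assume "y \<in> U"
    hence "y \<in> closure (pball_set d A e)" unfolding U_def
      using closure_subset interior_subset by blast
    thus "dbar_set d A y < u" using dbar_set_le[OF e(1)] e(2) by fastforce
  qed
  ultimately show ?thesis using e U_def by blast
qed

lemma cont_semi:
  fixes f :: "'a::topological_space \<Rightarrow> real"
  assumes l: "\<And>x l. l < f x \<Longrightarrow> \<exists>U. open U \<and> x \<in> U \<and> (\<forall>y\<in>U. l < f y)"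
    and u: "\<And>x u. f x < u \<Longrightarrow> \<exists>U. open U \<and> x \<in> U \<and> (\<forall>y\<in>U. f y < u)"
  shows "continuous_on UNIV f"
proof -
  have "(f \<longlongrightarrow> f x) (at x within UNIV)" for x
    unfolding order_tendsto_iff eventually_at_topological
    using l u by meson
  thus ?thesis by (simp add: continuous_on_def)
qed

lemma dbar_set_cont: assumes "A \<noteq> {}" "has_open_balls d" "\<And>x. dbar_circ_set d A x = dbar_set d A x"
  shows "continuous_on UNIV (dbar_set d A)"
  by (rule cont_semi) (use dbar_set_lsc[OF assms(1)] dbar_set_usc[OF assms(1,2) assms(3)] in blast)+

lemma circ_eq: assumes "A \<noteq> {}" "continuous_on UNIV (dbar_set d A)"
  shows "dbar_circ_set d A y = dbar_set d A y"
proof (rule antisym)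
  show "dbar_set d A y \<le> dbar_circ_set d A y"
    unfolding dbar_set_def dbar_circ_set_def
    by (rule cInf_superset_mono[OF C_ne[OF assms(1)] S_bdd])
       (use closure_subset interior_subset in blast)
  show "dbar_circ_set d A y \<le> dbar_set d A y"
  proof (rule dense_ge)
    fix e assume e: "dbar_set d A y < e"
    define U where "U = {z. dbar_set d A z < (\<lambda>_. e) z}"
    have oU: "open U" unfolding U_def by (rule open_Collect_less[OF assms(2)]) simp
    have "U \<subseteq> closure (pball_set d A e)"
    proof
      fix z assume "z \<in> U"
      then obtain e' where "e' > 0" "e' < e" "z \<in> closure (pball_set d A e')"
        unfolding U_def using dbar_set_less_iff[OF assms(1)] by auto
      thus "z \<in> closure (pball_set d A e)"
        using closure_mono[OF pball_set_mono[of e' e]] by auto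
    qed
    hence "y \<in> interior (closure (pball_set d A e))"
      using oU e interior_maximal unfolding U_def by blast
    moreover have "e > 0" using e dbar_set_nonneg[OF assms(1)] by (meson le_less_trans)
    ultimately show "dbar_circ_set d A y \<le> e"
      unfolding dbar_circ_set_def by (intro cInf_lower S_bdd) auto
  qed
qed

lemma dbar_nonneg: "0 \<le> dbar d x y"
  unfolding dbar_def by (rule dbar_set_nonneg) simp

lemma dbar_refl: assumes "premetric d" shows "dbar d x x = 0"
proof -
  have "dbar d x x \<le> e" if "e > 0" for e
  proof -
    have "x \<in> pball_set d {x} e" using assms that by (simp add: premetric_def pball_set_def pball_def)
    thus ?thesis unfolding dbar_def by (intro dbar_set_le[OF that]) (use closure_subset in blast)
  qed
  hence "dbar d x x \<le> 0" by (rule dense_ge) auto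
  thus ?thesis using dbar_nonneg[of d x x] by simp
qed

lemma premetric_dbar: "premetric d \<Longrightarrow> premetric (dbar d)"
  using dbar_nonneg dbar_refl unfolding premetric_def by blast

lemma closure_dbar: assumes "premetric d"
  shows "closure (pball_set (dbar d) A e) = closure (pball_set d A e)"
proof -
  have 1: "pball_set d A e \<subseteq> pball_set (dbar d) A e"
  proof
    fix y assume "y \<in> pball_set d A e"
    then obtain a where a: "a \<in> A" "d a y < e" unfolding pball_set_def pball_def by auto
    have ge: "0 \<le> d a y" using assms unfolding premetric_def by auto
    define e' where "e' = (d a y + e) / 2"
    have e': "e' > 0" "e' < e" "d a y < e'" using a ge unfolding e'_def by auto
    have "y \<in> pball_set d {a} e'" using e' by (simp add: pball_set_def pball_def)
    hence "y \<in> closure (pball_set d {a} e')" using closure_subset by blast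
    hence "\<exists>e''. e'' > 0 \<and> e'' < e \<and> y \<in> closure (pball_set d {a} e'')" using e' by blast
    hence "dbar d a y < e" unfolding dbar_def using dbar_set_less_iff[of "{a}" d y e] by simp
    thus "y \<in> pball_set (dbar d) A e" using a unfolding pball_set_def pball_def by auto
  qed
  have 2: "pball_set (dbar d) A e \<subseteq> closure (pball_set d A e)"
  proof
    fix y assume "y \<in> pball_set (dbar d) A e"
    then obtain a where a: "a \<in> A" "dbar d a y < e" unfolding pball_set_def pball_def by auto
    then obtain e' where e': "e' > 0" "e' < e" "y \<in> closure (pball_set d {a} e')"
      unfolding dbar_def using dbar_set_less_iff[of "{a}" d y e] by auto
    have "pball_set d {a} e' \<subseteq> pball_set d A e"
      using a e' unfolding pball_set_def pball_def by auto
    from closure_mono[OF this] show "y \<in> closure (pball_set d A e)" using e'(3) by (rule subsetD)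
  qed
  have "closure (pball_set (dbar d) A e) \<subseteq> closure (pball_set d A e)"
    using closure_mono[OF 2] by simp
  thus ?thesis using closure_mono[OF 1] by (rule antisym)
qed

lemma dbar_set_dbar: "premetric d \<Longrightarrow> dbar_set (dbar d) A = dbar_set d A"
proof
  fix x assume p: "premetric d"
  show "dbar_set (dbar d) A x = dbar_set d A x"
    unfolding dbar_set_def closure_dbar[OF p] ..
qed

theorem corollary1p6:
  fixes d :: "'a::topological_space \<Rightarrow> 'a \<Rightarrow> real"
  assumes "premetric d" and "has_open_balls d"
  shows "(dbar d = dbar_circ d \<longrightarrow> premetric (dbar d) \<and> right_continuous (dbar d))
       \<and> (dist_bar_continuous d \<longrightarrow>
            dbar d = dbar_circ d \<and> premetric (dbar d) \<and> right_continuous (dbar d)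
            \<and> dist_bar_continuous (dbar d))"
proof -
  have P1: "right_continuous (dbar d)" if h: "dbar d = dbar_circ d"
  proof -
    have "continuous_on UNIV (dbar_set d {x})" for x
      by (rule dbar_set_cont[OF _ assms(2)]) (use h in \<open>simp_all add: dbar_def dbar_circ_def fun_eq_iff\<close>)
    thus ?thesis unfolding right_continuous_def dbar_def[abs_def] by simp
  qed
  have E: "dbar d = dbar_circ d" if h: "dist_bar_continuous d"
    unfolding fun_eq_iff dbar_def dbar_circ_def
  proof (intro allI)
    fix x y
    have "continuous_on UNIV (dbar_set d {x})" using h unfolding dist_bar_continuous_def by simp
    from circ_eq[OF _ this] show "dbar_set d {x} y = dbar_circ_set d {x} y" by simp
  qed
  have D: "dist_bar_continuous (dbar d)" if "dist_bar_continuous d"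
    using that unfolding dist_bar_continuous_def dbar_set_dbar[OF assms(1)] .
  show ?thesis
    using P1 E D premetric_dbar[OF assms(1)] by blast
qed

end
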